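(* Let $K\subset\mathbb{C}$ be a totally imaginary quartic number field with ring of integers $\mathcal{O}_K$, such that $K_0=K\cap\mathbb{R}$ is a real quadratic field. Let $\sigma:K\to\mathbb{C}$ be a field embedding whose restriction to $K_0$ is the non-trivial automorphism of $K_0$. Let $\mathcal{B}\subseteq\mathbb{C}$ be a bounded set containing $0$ as an interior point, and let $$\mathcal{S}_{\mathcal B}=\{z\in\mathcal{O}_K : \sigma(z)\in\mathcal{B}\}.$$ If $z_1,z_2\in\mathcal{S}_{\mathcal B}$ with $z_1\neq z_2$, then $$|z_1-z_2|\ge\frac{1}{2\operatorname{diam}(\mathcal{B})}.$$
   Context: Elements of $K$ are regarded as complex numbers via the inclusion $K\subset\mathbb{C}$; $\operatorname{diam}(\mathcal B)=\sup\{|a-b|:a,b\in\mathcal B\}$. *)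

theory Defs
  imports "HOL-Analysis.Analysis" "HOL-Computational_Algebra.Polynomial"
begin

definition complex_subfield :: "complex set \<Rightarrow> bool" where
  "complex_subfield K \<longleftrightarrow> 0 \<in> K \<and> 1 \<in> K \<and>
     (\<forall>x\<in>K. \<forall>y\<in>K. x + y \<in> K \<and> x * y \<in> K) \<and>
     (\<forall>x\<in>K. - x \<in> K) \<and> (\<forall>x\<in>K. x \<noteq> 0 \<longrightarrow> inverse x \<in> K)"

definition rat_span :: "complex list \<Rightarrow> complex set" where
  "rat_span bs = {(\<Sum>i<length bs. of_rat (c i) * bs ! i) | c. True}"

definition rat_indep :: "complex list \<Rightarrow> bool" where
  "rat_indep bs \<longleftrightarrow> (\<forall>c. (\<Sum>i<length bs. of_rat (c i) * bs ! i) = 0 \<longrightarrow> (\<forall>i<length bs. c i = 0))"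

definition number_field_of_degree :: "complex set \<Rightarrow> nat \<Rightarrow> bool" where
  "number_field_of_degree K n \<longleftrightarrow> complex_subfield K \<and>
     (\<exists>bs. length bs = n \<and> rat_indep bs \<and> rat_span bs = K)"

definition field_embedding :: "complex set \<Rightarrow> (complex \<Rightarrow> complex) \<Rightarrow> bool" where
  "field_embedding K \<sigma> \<longleftrightarrow> \<sigma> 1 = 1 \<and>
     (\<forall>x\<in>K. \<forall>y\<in>K. \<sigma> (x + y) = \<sigma> x + \<sigma> y \<and> \<sigma> (x * y) = \<sigma> x * \<sigma> y)"

definition totally_imaginary :: "complex set \<Rightarrow> bool" where
  "totally_imaginary K \<longleftrightarrow> (\<forall>\<tau>. field_embedding K \<tau> \<longrightarrow> (\<exists>x\<in>K. \<tau> x \<notin> \<real>))"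

definition algebraic_integer :: "complex \<Rightarrow> bool" where
  "algebraic_integer x \<longleftrightarrow> (\<exists>p :: int poly. lead_coeff p = 1 \<and> poly (map_poly of_int p) x = 0)"

definition ring_of_integers :: "complex set \<Rightarrow> complex set" where
  "ring_of_integers K = {z \<in> K. algebraic_integer z}"

end

theory Submission
  imports Defs "Jordan_Normal_Form.Char_Poly"
begin


lemma module_alg_int:
  fixes n k :: nat and t :: "nat \<Rightarrow> complex" and a :: "nat \<Rightarrow> nat \<Rightarrow> int" and x :: complex
  assumes kn: "k < n" and tk: "t k \<noteq> 0"
    and rel: "\<And>i. i < n \<Longrightarrow> x * t i = (\<Sum>j<n. of_int (a i j) * t j)"
  shows "algebraic_integer x"
proof -
  define A :: "int mat" where "A = mat n n (\<lambda>(i,j). a i j)"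
  define B :: "complex mat" where "B = map_mat of_int A"
  define v where "v = vec n t"
  have A: "A \<in> carrier_mat n n" by (simp add: A_def)
  have B: "B \<in> carrier_mat n n" using A by (simp add: B_def)
  have "B *\<^sub>v v = x \<cdot>\<^sub>v v"
  proof (rule eq_vecI)
    fix i assume "i < dim_vec (x \<cdot>\<^sub>v v)"
    hence i: "i < n" by (simp add: v_def)
    have "(B *\<^sub>v v) $ i = (\<Sum>j<n. of_int (a i j) * t j)"
      using i by (simp add: B_def A_def v_def mult_mat_vec_def scalar_prod_def lessThan_atLeast0)
    also have "\<dots> = x * t i" using rel[OF i] by simp
    finally show "(B *\<^sub>v v) $ i = (x \<cdot>\<^sub>v v) $ i" using i by (simp add: v_def)
  qed (simp add: v_def B_def A_def)
  moreover have "v \<in> carrier_vec (dim_row B)" using B by (simp add: v_def)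
  moreover have "v \<noteq> 0\<^sub>v (dim_row B)"
  proof
    assume "v = 0\<^sub>v (dim_row B)"
    hence "v $ k = 0" using B kn by simp
    thus False using tk kn by (simp add: v_def)
  qed
  ultimately have "eigenvector B v x" by (simp add: eigenvector_def)
  hence "eigenvalue B x" by (auto simp: eigenvalue_def)
  hence "poly (char_poly B) x = 0" using eigenvalue_root_char_poly[OF B] by simp
  moreover have "char_poly B = map_poly of_int (char_poly A)"
    unfolding B_def by (rule of_int_hom.char_poly_hom[OF A])
  moreover have "lead_coeff (char_poly A) = 1" using degree_monic_char_poly[OF A] by simp
  ultimately show ?thesis unfolding algebraic_integer_def by metis
qed

definition Zspan :: "'i set \<Rightarrow> ('i \<Rightarrow> complex) \<Rightarrow> complex set" where
  "Zspan I s = {\<Sum>i\<in>I. of_int (c i) * s i | c. True}"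

lemma Zspan_I: "u = (\<Sum>i\<in>I. of_int (c i) * s i) \<Longrightarrow> u \<in> Zspan I s"
  unfolding Zspan_def by blast

lemma Zspan_0: "0 \<in> Zspan I s"
  unfolding Zspan_def by (rule CollectI, rule exI[of _ "\<lambda>_. 0"]) simp

lemma Zspan_add: assumes "u \<in> Zspan I s" "v \<in> Zspan I s" shows "u + v \<in> Zspan I s"
proof -
  obtain c d where "u = (\<Sum>i\<in>I. of_int (c i) * s i)" "v = (\<Sum>i\<in>I. of_int (d i) * s i)"
    using assms unfolding Zspan_def by blast
  hence "u + v = (\<Sum>i\<in>I. of_int (c i + d i) * s i)"
    by (simp add: sum.distrib distrib_right)
  thus ?thesis by (rule Zspan_I)
qed

lemma Zspan_smult: assumes "u \<in> Zspan I s" shows "of_int m * u \<in> Zspan I s"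
proof -
  obtain c where "u = (\<Sum>i\<in>I. of_int (c i) * s i)"
    using assms unfolding Zspan_def by blast
  hence "of_int m * u = (\<Sum>i\<in>I. of_int (m * c i) * s i)"
    by (simp add: sum_distrib_left mult.assoc)
  thus ?thesis by (rule Zspan_I)
qed

lemma Zspan_uminus: assumes "u \<in> Zspan I s" shows "- u \<in> Zspan I s"
  using Zspan_smult[OF assms, of "-1"] by simp

lemma Zspan_diff: assumes "u \<in> Zspan I s" "v \<in> Zspan I s" shows "u - v \<in> Zspan I s"
  using Zspan_add[OF assms(1) Zspan_uminus[OF assms(2)]] by simp

lemma Zspan_sum:
  assumes "finite F" "\<And>j. j \<in> F \<Longrightarrow> u j \<in> Zspan I s"
  shows "(\<Sum>j\<in>F. of_int (e j) * u j) \<in> Zspan I s"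
  using assms
proof (induction F rule: finite_induct)
  case empty thus ?case by (simp add: Zspan_0)
next
  case (insert a F)
  thus ?case by (simp add: Zspan_add Zspan_smult)
qed

lemma Zspan_base: assumes "finite I" "i \<in> I" shows "s i \<in> Zspan I s"
proof -
  have "(\<Sum>j\<in>I. of_int (if j = i then 1 else 0) * s j) = (\<Sum>j\<in>I. if j = i then s j else 0)"
    by (rule sum.cong) auto
  also have "\<dots> = s i" using assms by simp
  finally show ?thesis by (intro Zspan_I) (rule sym)
qed

lemma Zspan_mult_closed:
  assumes "finite I" "u \<in> Zspan I s" "\<And>i. i \<in> I \<Longrightarrow> x * s i \<in> Zspan I s"
  shows "x * u \<in> Zspan I s"
proof -
  obtain c where "u = (\<Sum>i\<in>I. of_int (c i) * s i)"
    using assms unfolding Zspan_def by blast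
  hence "x * u = (\<Sum>i\<in>I. of_int (c i) * (x * s i))"
    by (simp add: sum_distrib_left mult_ac)
  also have "\<dots> \<in> Zspan I s" by (rule Zspan_sum) (use assms in auto)
  finally show ?thesis .
qed

lemma module_alg_int':
  fixes I :: "'i set" and s :: "'i \<Rightarrow> complex"
  assumes fin: "finite I" and i0: "i0 \<in> I" "s i0 \<noteq> 0"
    and cl: "\<And>i. i \<in> I \<Longrightarrow> x * s i \<in> Zspan I s"
  shows "algebraic_integer x"
proof -
  obtain f where f: "bij_betw f {0..<card I} I" using ex_bij_betw_nat_finite[OF fin] by blast
  have "\<forall>i\<in>I. \<exists>c. x * s i = (\<Sum>j\<in>I. of_int (c j) * s j)"
    using cl unfolding Zspan_def by blast
  then obtain C where C: "\<And>i. i \<in> I \<Longrightarrow> x * s i = (\<Sum>j\<in>I. of_int (C i j) * s j)"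
    by metis
  define n where "n = card I"
  define t where "t = (\<lambda>k. s (f k))"
  define a where "a = (\<lambda>k j. C (f k) (f j))"
  define k0 where "k0 = inv_into {0..<n} f i0"
  have i0im: "i0 \<in> f ` {0..<n}" using f i0 unfolding n_def by (auto simp: bij_betw_def)
  have k0: "k0 < n" "f k0 = i0" using inv_into_into[OF i0im] f_inv_into_f[OF i0im] unfolding k0_def
    by auto
  show ?thesis
  proof (rule module_alg_int[of k0 n t x a])
    show "k0 < n" by fact
    show "t k0 \<noteq> 0" using k0 i0 by (simp add: t_def)
  next
    fix i assume i: "i < n"
    hence fi: "f i \<in> I" using f unfolding n_def by (auto simp: bij_betw_def)
    have "x * t i = (\<Sum>j\<in>I. of_int (C (f i) j) * s j)" using C[OF fi] by (simp add: t_def)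
    also have "\<dots> = (\<Sum>j\<in>{0..<n}. of_int (C (f i) (f j)) * s (f j))"
      using sum.reindex_bij_betw[OF f, of "\<lambda>j. of_int (C (f i) j) * s j"] unfolding n_def by simp
    finally show "x * t i = (\<Sum>j<n. of_int (a i j) * t j)"
      by (simp add: a_def t_def lessThan_atLeast0)
  qed
qed

lemma monic_root_powers:
  fixes p :: "int poly" and z :: complex
  assumes "lead_coeff p = 1" "poly (map_poly of_int p) z = 0"
  shows "z ^ m \<in> Zspan {..<degree p} (\<lambda>i. z ^ i)"
proof (induction m rule: less_induct)
  case (less m)
  define d where "d = degree p"
  show ?case
  proof (cases "m < d")
    case True thus ?thesis by (intro Zspan_base) (auto simp: d_def)
  next
    case False
    have "0 = poly (map_poly of_int p) z" using assms by simp
    also have "\<dots> = (\<Sum>i\<le>d. of_int (coeff p i) * z ^ i)"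
      by (simp add: poly_altdef d_def degree_map_poly)
    also have "\<dots> = (\<Sum>i<d. of_int (coeff p i) * z ^ i) + z ^ d"
      using assms(1) by (simp add: lessThan_Suc_atMost[symmetric] d_def)
    finally have zd: "z ^ d = - (\<Sum>i<d. of_int (coeff p i) * z ^ i)" by (simp add: eq_neg_iff_add_eq_0 add.commute)
    have "z ^ m = z ^ (m - d) * z ^ d" using False by (simp add: power_add[symmetric])
    also have "\<dots> = (\<Sum>i<d. of_int (- coeff p i) * z ^ (m - d + i))"
      by (simp add: zd sum_distrib_left power_add mult_ac sum_negf)
    also have "\<dots> \<in> Zspan {..<degree p} (\<lambda>i. z ^ i)"
    proof (rule Zspan_sum)
      fix i assume "i \<in> {..<d}"
      hence "m - d + i < m" using False by auto
      thus "z ^ (m - d + i) \<in> Zspan {..<degree p} (\<lambda>i. z ^ i)" by (rule less.IH)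
    qed simp
    finally show ?thesis .
  qed
qed


lemma monic_root_degree_pos:
  fixes p :: "int poly" and z :: complex
  assumes "lead_coeff p = 1" "poly (map_poly of_int p) z = 0"
  shows "degree p > 0"
proof (rule ccontr)
  assume "\<not> degree p > 0"
  hence d: "degree p = 0" by simp
  have "poly (map_poly of_int p) z = (\<Sum>i\<le>degree p. of_int (coeff p i) * z ^ i)"
    by (simp add: poly_altdef degree_map_poly)
  also have "\<dots> = 1" using d assms(1) by simp
  finally show False using assms(2) by simp
qed

lemma alg_int_ops:
  assumes ax: "algebraic_integer x" and ay: "algebraic_integer y"
  shows "algebraic_integer (x - y)" "algebraic_integer (x * y)"
proof -
  obtain p where p: "lead_coeff p = 1" "poly (map_poly of_int p) x = 0"
    using ax unfolding algebraic_integer_def by blast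
  obtain q where q: "lead_coeff q = 1" "poly (map_poly of_int q) y = 0"
    using ay unfolding algebraic_integer_def by blast
  define I where "I = {..<degree p} \<times> {..<degree q}"
  define s where "s = (\<lambda>(i::nat,j::nat). x ^ i * y ^ j)"
  have fin: "finite I" by (simp add: I_def)
  have i0: "(0,0) \<in> I" using monic_root_degree_pos[OF p] monic_root_degree_pos[OF q] by (simp add: I_def)
  have s0: "s (0,0) \<noteq> 0" by (simp add: s_def)
  have gen: "x ^ m * y ^ l \<in> Zspan I s" for m l
  proof -
    obtain c where c: "x ^ m = (\<Sum>i<degree p. of_int (c i) * x ^ i)"
      using monic_root_powers[OF p, of m] unfolding Zspan_def by blast
    obtain e where e: "y ^ l = (\<Sum>j<degree q. of_int (e j) * y ^ j)"
      using monic_root_powers[OF q, of l] unfolding Zspan_def by blast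
    have "x ^ m * y ^ l = (\<Sum>i<degree p. \<Sum>j<degree q. of_int (c i * e j) * s (i,j))"
      by (simp add: c e sum_product s_def mult_ac)
    also have "\<dots> = (\<Sum>ij\<in>I. of_int ((\<lambda>(i,j). c i * e j) ij) * s ij)"
      unfolding I_def by (simp add: sum.cartesian_product split_beta)
    finally show ?thesis by (rule Zspan_I)
  qed
  show "algebraic_integer (x - y)"
  proof (rule module_alg_int'[of I "(0,0)" s, OF fin i0 s0])
    fix ij assume "ij \<in> I"
    obtain i j where ij: "ij = (i,j)" by fastforce
    have "(x - y) * s ij = x ^ Suc i * y ^ j - x ^ i * y ^ Suc j"
      by (simp add: ij s_def algebra_simps)
    thus "(x - y) * s ij \<in> Zspan I s" using Zspan_diff[OF gen[of "Suc i" j] gen[of i "Suc j"]] by simp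
  qed
  show "algebraic_integer (x * y)"
  proof (rule module_alg_int'[of I "(0,0)" s, OF fin i0 s0])
    fix ij assume "ij \<in> I"
    obtain i j where ij: "ij = (i,j)" by fastforce
    have "(x * y) * s ij = x ^ Suc i * y ^ Suc j"
      by (simp add: ij s_def algebra_simps)
    thus "(x * y) * s ij \<in> Zspan I s" using gen[of "Suc i" "Suc j"] by (simp only:)
  qed
qed



context
  fixes K :: "complex set" and \<sigma> :: "complex \<Rightarrow> complex"
  assumes sub: "complex_subfield K" and emb: "field_embedding K \<sigma>"
begin

lemma K0: "0 \<in> K" and K1: "1 \<in> K" and Kadd: "x \<in> K \<Longrightarrow> y \<in> K \<Longrightarrow> x + y \<in> K"
  and Kmult: "x \<in> K \<Longrightarrow> y \<in> K \<Longrightarrow> x * y \<in> K" and Kuminus: "x \<in> K \<Longrightarrow> - x \<in> K"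
  and Kinv: "x \<in> K \<Longrightarrow> inverse x \<in> K"
  using sub unfolding complex_subfield_def by auto

lemma Kdiff: assumes "x \<in> K" "y \<in> K" shows "x - y \<in> K"
proof -
  have "x + - y \<in> K" by (rule Kadd[OF assms(1) Kuminus[OF assms(2)]])
  thus ?thesis by (simp only: diff_conv_add_uminus)
qed

lemma Kdiv: assumes "x \<in> K" "y \<in> K" shows "x / y \<in> K"
proof -
  have "x * inverse y \<in> K" by (rule Kmult[OF assms(1) Kinv[OF assms(2)]])
  thus ?thesis by (simp only: divide_inverse)
qed

lemma Kpow: "x \<in> K \<Longrightarrow> x ^ n \<in> K"
  by (induction n) (auto intro: Kmult K1)

lemma Knat: "of_nat n \<in> K"
  by (induction n) (auto intro: Kadd K1 K0)

lemma Kint: "of_int m \<in> K"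
proof -
  have "m = int (nat m) \<or> m = - int (nat (- m))" by arith
  moreover have "of_int (int (nat m)) \<in> K" using Knat[of "nat m"] by (simp only: of_int_of_nat_eq)
  moreover have "of_int (- int (nat (- m))) \<in> K" using Kuminus[OF Knat[of "nat (- m)"]] by (simp only: of_int_minus of_int_of_nat_eq)
  ultimately show ?thesis by (elim disjE) (simp only:)+
qed

lemma Krat: "of_rat q \<in> K"
proof -
  obtain a b where ab: "quotient_of q = (a, b)" by fastforce
  have q: "q = of_int a / of_int b" "b > 0" using quotient_of_div[OF ab] quotient_of_denom_pos[OF ab] by auto
  have "of_rat q = (of_int a :: complex) / of_int b" using q by (simp add: of_rat_divide)
  thus ?thesis using Kdiv[OF Kint Kint] by simp
qed

lemma s1: "\<sigma> 1 = 1" and sadd: "x \<in> K \<Longrightarrow> y \<in> K \<Longrightarrow> \<sigma> (x + y) = \<sigma> x + \<sigma> y"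
  and smult: "x \<in> K \<Longrightarrow> y \<in> K \<Longrightarrow> \<sigma> (x * y) = \<sigma> x * \<sigma> y"
  using emb unfolding field_embedding_def by auto

lemma s0: "\<sigma> 0 = 0"
  using sadd[OF K0 K0] by simp

lemma suminus: assumes "x \<in> K" shows "\<sigma> (- x) = - \<sigma> x"
proof -
  have "\<sigma> (x + - x) = \<sigma> x + \<sigma> (- x)" using sadd[OF assms Kuminus[OF assms]] .
  hence "\<sigma> x + \<sigma> (- x) = 0" using s0 by simp
  have "\<sigma> (- x) = (\<sigma> x + \<sigma> (- x)) - \<sigma> x" by simp
  also have "\<dots> = - \<sigma> x" using \<open>\<sigma> x + \<sigma> (- x) = 0\<close> by simp
  finally show ?thesis .
qed

lemma sdiff: assumes "x \<in> K" "y \<in> K" shows "\<sigma> (x - y) = \<sigma> x - \<sigma> y"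
proof -
  have "\<sigma> (x + - y) = \<sigma> x + \<sigma> (- y)" by (rule sadd[OF assms(1) Kuminus[OF assms(2)]])
  also have "\<dots> = \<sigma> x + - \<sigma> y" by (simp only: suminus[OF assms(2)])
  finally show ?thesis by (simp only: diff_conv_add_uminus)
qed

lemma spow: "x \<in> K \<Longrightarrow> \<sigma> (x ^ n) = \<sigma> x ^ n"
  by (induction n) (auto simp: s1 smult Kpow)

lemma snat: "\<sigma> (of_nat n) = of_nat n"
  by (induction n) (auto simp: s0 s1 sadd Knat K1)

lemma sint: "\<sigma> (of_int m) = of_int m"
proof -
  have "m = int (nat m) \<or> m = - int (nat (- m))" by arith
  moreover have "\<sigma> (of_int (int (nat m))) = of_int (int (nat m))" using snat[of "nat m"] by (simp only: of_int_of_nat_eq)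
  moreover have "\<sigma> (of_int (- int (nat (- m)))) = of_int (- int (nat (- m)))"
    using suminus[OF Knat[of "nat (- m)"]] snat[of "nat (- m)"] by (simp only: of_int_minus of_int_of_nat_eq)
  ultimately show ?thesis by (elim disjE) (simp only:)+
qed

lemma srat: "\<sigma> (of_rat q) = of_rat q"
proof -
  obtain a b where ab: "quotient_of q = (a, b)" by fastforce
  have q: "q = of_int a / of_int b" "b > 0" using quotient_of_div[OF ab] quotient_of_denom_pos[OF ab] by auto
  have u: "of_rat q = (of_int a :: complex) / of_int b" using q by (simp add: of_rat_divide)
  have d: "(of_int a / of_int b :: complex) \<in> K" by (rule Kdiv[OF Kint Kint])
  have "\<sigma> (of_int b * (of_int a / of_int b)) = of_int b * \<sigma> (of_int a / of_int b)"
    using smult[OF Kint d, of b] sint[of b] by simp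
  moreover have "(of_int b :: complex) * (of_int a / of_int b) = of_int a" using q by simp
  ultimately have "of_int b * \<sigma> (of_int a / of_int b) = of_int a" using sint[of a] by simp
  hence "\<sigma> (of_int a / of_int b) = of_int a / of_int b" using q by (simp add: field_simps)
  thus ?thesis using u by simp
qed

lemma snonzero: assumes "x \<in> K" "x \<noteq> 0" shows "\<sigma> x \<noteq> 0"
proof
  assume "\<sigma> x = 0"
  have "\<sigma> (x * inverse x) = \<sigma> x * \<sigma> (inverse x)" using smult[OF assms(1) Kinv[OF assms(1)]] .
  thus False using \<open>\<sigma> x = 0\<close> assms(2) s1 by simp
qed

lemma ssum: "finite A \<Longrightarrow> (\<And>i. i \<in> A \<Longrightarrow> f i \<in> K) \<Longrightarrow> sum f A \<in> K \<and> \<sigma> (sum f A) = (\<Sum>i\<in>A. \<sigma> (f i))"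
proof (induction A rule: finite_induct)
  case empty thus ?case by (simp add: K0 s0)
next
  case (insert a A)
  have fa: "f a \<in> K" using insert.prems by blast
  have "\<And>i. i \<in> A \<Longrightarrow> f i \<in> K" using insert.prems by blast
  hence IH: "sum f A \<in> K" "\<sigma> (sum f A) = (\<Sum>i\<in>A. \<sigma> (f i))" using insert.IH by blast+
  have e1: "sum f (insert a A) = f a + sum f A" by (rule sum.insert[OF insert.hyps(1,2)])
  have e2: "(\<Sum>i\<in>insert a A. \<sigma> (f i)) = \<sigma> (f a) + (\<Sum>i\<in>A. \<sigma> (f i))" by (rule sum.insert[OF insert.hyps(1,2)])
  show ?case unfolding e1 e2 using Kadd[OF fa IH(1)] sadd[OF fa IH(1)] IH(2) by (simp only:)
qed

lemma spoly: "poly (map_poly of_int p) x \<in> K \<and> \<sigma> (poly (map_poly of_int p) x) = poly (map_poly of_int p) (\<sigma> x)"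
  if xK: "x \<in> K"
proof -
  have pa: "poly (map_poly of_int p) y = (\<Sum>i\<le>degree p. of_int (coeff p i) * y ^ i)" for y :: complex
    by (simp add: poly_altdef degree_map_poly)
  have tK: "of_int (coeff p i) * x ^ i \<in> K" for i by (rule Kmult[OF Kint Kpow[OF xK]])
  have st: "\<sigma> (of_int (coeff p i) * x ^ i) = of_int (coeff p i) * \<sigma> x ^ i" for i
    using smult[OF Kint Kpow[OF xK]] sint spow[OF xK] by simp
  have ss: "(\<Sum>i\<le>degree p. of_int (coeff p i) * x ^ i) \<in> K \<and>
     \<sigma> (\<Sum>i\<le>degree p. of_int (coeff p i) * x ^ i) = (\<Sum>i\<le>degree p. \<sigma> (of_int (coeff p i) * x ^ i))"
    by (rule ssum) (auto intro: tK)
  have "(\<Sum>i\<le>degree p. \<sigma> (of_int (coeff p i) * x ^ i)) = (\<Sum>i\<le>degree p. of_int (coeff p i) * \<sigma> x ^ i)"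
    by (rule sum.cong[OF refl st])
  thus ?thesis unfolding pa using ss by (simp only:)
qed

end

definition rsc :: "rat \<Rightarrow> complex \<Rightarrow> complex" where "rsc q z = of_rat q * z"

interpretation RV: vector_space rsc
  by unfold_locales (auto simp: rsc_def algebra_simps of_rat_add of_rat_mult)

lemma nf_span_bound:
  assumes "number_field_of_degree L n"
  shows "\<exists>B. finite B \<and> card B \<le> n \<and> L \<subseteq> RV.span B"
proof -
  obtain bs where bs: "length bs = n" "rat_span bs = L"
    using assms unfolding number_field_of_degree_def by blast
  have "L \<subseteq> RV.span (set bs)"
  proof
    fix x assume "x \<in> L"
    then obtain c where x: "x = (\<Sum>i<length bs. rsc (c i) (bs ! i))"
      using bs(2) unfolding rat_span_def rsc_def by blast
    show "x \<in> RV.span (set bs)" unfolding x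
      by (intro RV.span_sum RV.span_scale RV.span_base) auto
  qed
  thus ?thesis using bs(1) card_length[of bs] by blast
qed

lemma fill_span:
  assumes "number_field_of_degree L n" "T \<subseteq> L" "finite T" "RV.independent T" "card T = n" "x \<in> L"
  shows "x \<in> RV.span T"
proof (rule ccontr)
  assume nx: "x \<notin> RV.span T"
  obtain B where B: "finite B" "card B \<le> n" "L \<subseteq> RV.span B" using nf_span_bound[OF assms(1)] by blast
  have ind: "RV.independent (insert x T)" using RV.independent_insertI[OF nx assms(4)] .
  have "x \<notin> T" using nx RV.span_superset by blast
  hence c: "card (insert x T) = Suc n" using assms(3,5) by simp
  have "insert x T \<subseteq> RV.span B" using assms(2,6) B(3) by blast
  from RV.independent_span_bound[OF B(1) ind this] have "card (insert x T) \<le> card B" by simp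
  thus False using c B(2) by simp
qed

lemma span_ins: "RV.span (insert a S) = {x. \<exists>k. x - of_rat k * a \<in> RV.span S}"
  by (simp only: RV.span_insert rsc_def)



lemma rat_real: "(of_rat q :: complex) \<in> \<real>"
proof -
  obtain a b where ab: "quotient_of q = (a,b)" by fastforce
  hence "q = of_int a / of_int b" by (rule quotient_of_div)
  hence "(of_rat q :: complex) = of_int a / of_int b" by (simp add: of_rat_divide)
  thus ?thesis by (simp add: Reals_divide)
qed

lemma cnj_neg: assumes "w \<notin> \<real>" "w ^ 2 \<in> \<real>" shows "cnj w = - w"
proof -
  have "Im w \<noteq> 0" using assms(1) by (simp add: complex_is_Real_iff)
  moreover have "Im (w ^ 2) = 0" using assms(2) by (simp add: complex_is_Real_iff)
  hence "2 * Re w * Im w = 0" by (auto simp: power2_eq_square)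
  ultimately have "Re w = 0" by auto
  thus ?thesis by (simp add: complex_eq_iff)
qed

lemma alg_integer_iff: "algebraic_integer x \<longleftrightarrow> algebraic_int x"
  unfolding algebraic_integer_def algebraic_int_altdef_ipoly by blast

lemma span1: "RV.span (insert 1 {}) = {x. \<exists>k. x = of_rat k}"
  by (auto simp: span_ins)

lemma span2: "RV.span (insert r (insert 1 {})) = {x. \<exists>a b. x = of_rat a + of_rat b * r}"
  by (auto simp: span_ins algebra_simps)

lemma span4: "RV.span (insert (r * w) (insert w (insert r (insert 1 {})))) =
  {x. \<exists>a b c d. x = of_rat a + of_rat b * r + (of_rat c + of_rat d * r) * w}"
  by (auto simp: span_ins algebra_simps)


lemma norm_bound:
  fixes K :: "complex set" and \<sigma> :: "complex \<Rightarrow> complex" and r z :: complex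
  assumes K4: "number_field_of_degree K 4" and ti: "totally_imaginary K"
    and K02: "number_field_of_degree (K \<inter> \<real>) 2"
    and emb: "field_embedding K \<sigma>" and im: "\<sigma> ` (K \<inter> \<real>) = K \<inter> \<real>"
    and rK: "r \<in> K \<inter> \<real>" and rs: "\<sigma> r \<noteq> r"
    and zK: "z \<in> K" and zi: "algebraic_integer z" and z0: "z \<noteq> 0"
  shows "cmod z * cmod (\<sigma> z) \<ge> 1"
proof -
  have sub: "complex_subfield K" using K4 by (simp add: number_field_of_degree_def)
  note KK = K0[OF sub emb] K1[OF sub emb] Kadd[OF sub emb] Kmult[OF sub emb] Kuminus[OF sub emb]
    Kdiff[OF sub emb] Kdiv[OF sub emb] Kpow[OF sub emb] Krat[OF sub emb] Kint[OF sub emb]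
  note SS = s1[OF sub emb] sadd[OF sub emb] smult[OF sub emb] s0[OF sub emb] suminus[OF sub emb]
    sdiff[OF sub emb] spow[OF sub emb] srat[OF sub emb] sint[OF sub emb]
  have sK0: "\<sigma> x \<in> K \<inter> \<real>" if "x \<in> K \<inter> \<real>" for x using im that by blast
  have rR: "r \<in> \<real>" "r \<in> K" using rK by auto
  have srR: "\<sigma> r \<in> \<real>" using sK0[OF rK] by auto
  have rnq: "r \<noteq> of_rat q" for q
  proof
    assume "r = of_rat q"
    hence "\<sigma> r = r" using SS by simp
    thus False using rs by simp
  qed
  have ind1: "RV.independent (insert 1 {})"
    by (rule RV.independent_insertI) (use RV.independent_empty in auto)
  have r_not1: "r \<notin> RV.span (insert 1 {})" using rnq by (auto simp: span1)
  have ind2: "RV.independent (insert r (insert 1 {}))" by (rule RV.independent_insertI[OF r_not1 ind1])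
  have r1: "r \<noteq> 1" using rnq[of 1] by simp
  have K0span: "\<exists>a b. x = of_rat a + of_rat b * r" if "x \<in> K \<inter> \<real>" for x
  proof -
    have "x \<in> RV.span (insert r (insert 1 {}))"
      by (rule fill_span[OF K02 _ _ ind2 _ that]) (use rK r1 KK in auto)
    thus ?thesis by (simp add: span2)
  qed
  have r2: "r ^ 2 \<in> K \<inter> \<real>" using rK KK by auto
  obtain \<alpha> \<beta> where ab: "r ^ 2 = of_rat \<alpha> + of_rat \<beta> * r" using K0span[OF r2] by blast
  have "\<sigma> (r ^ 2) = of_rat \<alpha> + of_rat \<beta> * \<sigma> r"
    unfolding ab using SS KK rR by simp
  hence sab: "\<sigma> r ^ 2 = of_rat \<alpha> + of_rat \<beta> * \<sigma> r" using SS rR by simp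
  have "(r - \<sigma> r) * (r + \<sigma> r - of_rat \<beta>) = 0"
    using ab sab by (simp add: algebra_simps power2_eq_square)
  hence rsum: "r + \<sigma> r = of_rat \<beta>" using rs by simp
  have rprod: "r * \<sigma> r = - of_rat \<alpha>"
  proof -
    have "\<sigma> r = of_rat \<beta> - r" using rsum by (simp add: algebra_simps)
    hence "r * \<sigma> r = r * (of_rat \<beta> - r)" by simp
    also have "\<dots> = - of_rat \<alpha>" using ab by (simp add: algebra_simps power2_eq_square)
    finally show ?thesis .
  qed
  have normQ: "\<exists>q. x * \<sigma> x = of_rat q" if xK0: "x \<in> K \<inter> \<real>" for x
  proof -
    obtain a b where x: "x = of_rat a + of_rat b * r" using K0span[OF xK0] by blast
    have sx: "\<sigma> x = of_rat a + of_rat b * \<sigma> r" unfolding x using SS KK rR by simp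
    have "x * \<sigma> x = of_rat a ^ 2 + of_rat a * of_rat b * (r + \<sigma> r) + of_rat b ^ 2 * (r * \<sigma> r)"
      unfolding sx by (simp add: x algebra_simps power2_eq_square)
    also have "\<dots> = of_rat (a ^ 2 + a * b * \<beta> - b ^ 2 * \<alpha>)"
      unfolding rsum rprod by (simp add: of_rat_add of_rat_mult of_rat_diff of_rat_power algebra_simps)
    finally show ?thesis by blast
  qed
  have four: "\<exists>a b c d. y = of_rat a + of_rat b * r + (of_rat c + of_rat d * r) * w"
    if wK: "w \<in> K" and wR: "w \<notin> \<real>" and yK: "y \<in> K" for w y
  proof -
    have w_not: "w \<notin> RV.span (insert r (insert 1 {}))"
    proof
      assume "w \<in> RV.span (insert r (insert 1 {}))"
      then obtain a b where "w = of_rat a + of_rat b * r" by (auto simp: span2)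
      hence "w \<in> \<real>" using rR rat_real by (simp add: Reals_add Reals_mult)
      thus False using wR by simp
    qed
    have rw_not: "r * w \<notin> RV.span (insert w (insert r (insert 1 {})))"
    proof
      assume "r * w \<in> RV.span (insert w (insert r (insert 1 {})))"
      then obtain k a b where k: "r * w - of_rat k * w = of_rat a + of_rat b * r"
        by (auto simp: span_ins span2 algebra_simps)
      have "r - of_rat k \<noteq> 0" using rnq[of k] by simp
      hence "w = (of_rat a + of_rat b * r) / (r - of_rat k)" using k
        by (simp add: field_simps)
      hence "w \<in> \<real>" using rR rat_real by (simp add: Reals_add Reals_mult Reals_divide Reals_diff)
      thus False using wR by simp
    qed
    have ind3: "RV.independent (insert w (insert r (insert 1 {})))" by (rule RV.independent_insertI[OF w_not ind2])
    have ind4: "RV.independent (insert (r * w) (insert w (insert r (insert 1 {}))))"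
      by (rule RV.independent_insertI[OF rw_not ind3])
    have n1: "w \<notin> insert r (insert 1 {})" using w_not by (meson RV.span_base)
    have n2: "r * w \<notin> insert w (insert r (insert 1 {}))" using rw_not by (meson RV.span_base)
    have c2: "card (insert r (insert 1 {})) = 2" using r1 by simp
    have c3: "card (insert w (insert r (insert 1 {}))) = 3"
      using card_insert_disjoint[OF _ n1] c2 by simp
    have c4: "card (insert (r * w) (insert w (insert r (insert 1 {})))) = 4"
      using card_insert_disjoint[OF _ n2] c3 by simp
    have "y \<in> RV.span (insert (r * w) (insert w (insert r (insert 1 {}))))"
      by (rule fill_span[OF K4 _ _ ind4 c4 yK]) (use rK wK KK in auto)
    thus ?thesis by (simp add: span4)
  qed
  \<comment> \<open>a purely imaginary generator\<close>
  have eid: "field_embedding K id" by (simp add: field_embedding_def)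
  have "\<exists>x\<in>K. id x \<notin> \<real>" using ti eid unfolding totally_imaginary_def by blast
  then obtain \<theta> where \<theta>K: "\<theta> \<in> K" and \<theta>R: "\<theta> \<notin> \<real>" by auto
  obtain a b c d where th2: "\<theta> ^ 2 = of_rat a + of_rat b * r + (of_rat c + of_rat d * r) * \<theta>"
    using four[OF \<theta>K \<theta>R KK(8)[OF \<theta>K, of 2]] by blast
  define A where "A = of_rat a + of_rat b * r"
  define B where "B = of_rat c + of_rat d * r"
  have AR: "A \<in> \<real>" "A \<in> K" and BR: "B \<in> \<real>" "B \<in> K"
    using rR rat_real KK by (auto simp: A_def B_def Reals_add Reals_mult)
  define \<phi> where "\<phi> = 2 * \<theta> - B"
  have \<phi>K: "\<phi> \<in> K" unfolding \<phi>_def mult_2 by (rule KK(6)[OF KK(3)[OF \<theta>K \<theta>K] BR(2)])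
  have \<phi>R: "\<phi> \<notin> \<real>"
  proof
    assume "\<phi> \<in> \<real>"
    hence "(\<phi> + B) / 2 \<in> \<real>" using BR by (simp add: Reals_add Reals_divide)
    moreover have "(\<phi> + B) / 2 = \<theta>" by (simp add: \<phi>_def)
    ultimately show False using \<theta>R by simp
  qed
  have th2': "\<theta> ^ 2 = A + B * \<theta>" using th2 by (simp add: A_def B_def)
  have "\<phi> ^ 2 = 4 * \<theta> ^ 2 - 4 * B * \<theta> + B ^ 2"
    by (simp add: \<phi>_def power2_eq_square algebra_simps)
  also have "\<dots> = 4 * A + B ^ 2" unfolding th2' by (simp add: algebra_simps)
  finally have \<phi>2: "\<phi> ^ 2 = 4 * A + B ^ 2" .
  have "\<phi> ^ 2 \<in> \<real>" unfolding \<phi>2 using AR BR by (simp add: Reals_add Reals_mult Reals_power)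
  hence \<phi>2R: "\<phi> ^ 2 \<in> K \<inter> \<real>" using KK(8)[OF \<phi>K, of 2] by blast
  have cnj\<phi>: "cnj \<phi> = - \<phi>" using cnj_neg[OF \<phi>R] \<phi>2R by simp
  have s\<phi>2: "\<sigma> \<phi> ^ 2 \<in> \<real>" using sK0[OF \<phi>2R] SS \<phi>K by simp
  have s\<phi>R: "\<sigma> \<phi> \<notin> \<real>"
  proof
    assume sR: "\<sigma> \<phi> \<in> \<real>"
    obtain x where xK: "x \<in> K" and xR: "\<sigma> x \<notin> \<real>" using ti emb unfolding totally_imaginary_def by blast
    obtain a b c d where x: "x = of_rat a + of_rat b * r + (of_rat c + of_rat d * r) * \<phi>"
      using four[OF \<phi>K \<phi>R xK] by blast
    have "\<sigma> x = of_rat a + of_rat b * \<sigma> r + (of_rat c + of_rat d * \<sigma> r) * \<sigma> \<phi>"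
      unfolding x using SS KK rR \<phi>K by simp
    hence "\<sigma> x \<in> \<real>" using sR srR rat_real by (simp add: Reals_add Reals_mult)
    thus False using xR by simp
  qed
  have cnjs\<phi>: "cnj (\<sigma> \<phi>) = - \<sigma> \<phi>" using cnj_neg[OF s\<phi>R s\<phi>2] .
  obtain a b c d where zrep: "z = of_rat a + of_rat b * r + (of_rat c + of_rat d * r) * \<phi>"
    using four[OF \<phi>K \<phi>R zK] by blast
  define u where "u = of_rat a + of_rat b * r"
  define v where "v = of_rat c + of_rat d * r"
  have uv: "u \<in> K" "v \<in> K" "cnj u = u" "cnj v = v"
    using rR rat_real KK by (auto simp: u_def v_def Reals_cnj_iff Reals_add Reals_mult)
  have zuv: "z = u + v * \<phi>" by (simp add: zrep u_def v_def)
  have cz: "cnj z = u - v * \<phi>" using uv cnj\<phi> by (simp add: zuv)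
  have czK: "cnj z \<in> K" using cz uv \<phi>K KK by simp
  have su: "\<sigma> u = of_rat a + of_rat b * \<sigma> r" unfolding u_def using SS KK rR by simp
  have sv: "\<sigma> v = of_rat c + of_rat d * \<sigma> r" unfolding v_def using SS KK rR by simp
  have suR: "cnj (\<sigma> u) = \<sigma> u" "cnj (\<sigma> v) = \<sigma> v"
    using su sv srR rat_real by (auto simp: Reals_cnj_iff Reals_add Reals_mult)
  have scz: "\<sigma> (cnj z) = cnj (\<sigma> z)"
  proof -
    have "\<sigma> (cnj z) = \<sigma> u - \<sigma> v * \<sigma> \<phi>" unfolding cz using SS KK uv \<phi>K by simp
    moreover have "\<sigma> z = \<sigma> u + \<sigma> v * \<sigma> \<phi>" unfolding zuv using SS KK uv \<phi>K by simp
    ultimately show ?thesis using suR cnjs\<phi> by simp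
  qed
  define n where "n = z * cnj z"
  have "n \<in> \<real>" unfolding n_def complex_mult_cnj by simp
  hence nK0: "n \<in> K \<inter> \<real>" using KK(4)[OF zK czK] by (simp add: n_def)
  have sn: "\<sigma> n = \<sigma> z * cnj (\<sigma> z)" unfolding n_def using SS zK czK scz by simp
  obtain q where nq: "n * \<sigma> n = of_rat q" using normQ[OF nK0] by blast
  define N where "N = z * cnj z * (\<sigma> z * cnj (\<sigma> z))"
  have Nq: "N \<in> \<rat>" using nq sn by (simp add: N_def n_def)
  obtain p where p: "lead_coeff p = 1" "poly (map_poly of_int p) z = 0"
    using zi unfolding algebraic_integer_def by blast
  have "poly (map_poly of_int p) (\<sigma> z) = 0"
    using spoly[OF sub emb zK, of p] p(2) SS by simp
  hence szi: "algebraic_integer (\<sigma> z)" using p(1) unfolding algebraic_integer_def by blast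
  have czi: "algebraic_integer (cnj z)" using zi by (simp add: alg_integer_iff)
  have csz: "algebraic_integer (cnj (\<sigma> z))" using szi by (simp add: alg_integer_iff)
  have "algebraic_integer N" unfolding N_def
    by (intro alg_int_ops(2) zi czi szi csz)
  hence NZ: "N \<in> \<int>" using Nq rational_algebraic_int_is_int by (simp add: alg_integer_iff)
  have szn: "\<sigma> z \<noteq> 0" using snonzero[OF sub emb zK z0] .
  have Nr: "N = of_real ((cmod z * cmod (\<sigma> z)) ^ 2)"
    unfolding N_def by (simp add: complex_norm_square[symmetric] power_mult_distrib)
  obtain m where m: "N = of_int m" using NZ by (auto elim: Ints_cases)
  have "(cmod z * cmod (\<sigma> z)) ^ 2 = of_int m" using Nr m
    by (metis of_real_eq_iff of_real_of_int_eq)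
  moreover have "(cmod z * cmod (\<sigma> z)) ^ 2 > 0" using z0 szn by simp
  ultimately have P2: "(cmod z * cmod (\<sigma> z)) ^ 2 \<ge> 1" by simp
  define P where "P = cmod z * cmod (\<sigma> z)"
  have P0: "P \<ge> 0" by (simp add: P_def)
  show ?thesis
  proof (rule ccontr)
    assume "\<not> 1 \<le> cmod z * cmod (\<sigma> z)"
    hence P1: "P < 1" by (simp add: P_def)
    hence "P * P \<le> P * 1" using P0 by (intro mult_left_mono) auto
    hence "P ^ 2 < 1" using P1 by (simp add: power2_eq_square)
    thus False using P2 by (simp add: P_def)
  qed
qed


theorem mainTheorem2:
  fixes K :: "complex set" and \<sigma> :: "complex \<Rightarrow> complex" and B :: "complex set"
    and z1 z2 :: complex
  assumes "number_field_of_degree K 4"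
    and "totally_imaginary K"
    and "number_field_of_degree (K \<inter> \<real>) 2"
    and "field_embedding K \<sigma>"
    and "\<sigma> ` (K \<inter> \<real>) = K \<inter> \<real>"
    and "\<exists>x\<in>K \<inter> \<real>. \<sigma> x \<noteq> x"
    and "bounded B" and "0 \<in> interior B"
    and "z1 \<in> {z \<in> ring_of_integers K. \<sigma> z \<in> B}"
    and "z2 \<in> {z \<in> ring_of_integers K. \<sigma> z \<in> B}"
    and "z1 \<noteq> z2"
  shows "cmod (z1 - z2) \<ge> 1 / (2 * diameter B)"
proof -
  have sub: "complex_subfield K" using assms(1) by (simp add: number_field_of_degree_def)
  obtain r where r: "r \<in> K \<inter> \<real>" "\<sigma> r \<noteq> r" using assms(6) by blast
  have z1: "z1 \<in> K" "algebraic_integer z1" "\<sigma> z1 \<in> B" using assms(9) by (auto simp: ring_of_integers_def)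
  have z2: "z2 \<in> K" "algebraic_integer z2" "\<sigma> z2 \<in> B" using assms(10) by (auto simp: ring_of_integers_def)
  define z where "z = z1 - z2"
  have zK: "z \<in> K" unfolding z_def by (rule Kdiff[OF sub assms(4) z1(1) z2(1)])
  have zi: "algebraic_integer z" unfolding z_def by (rule alg_int_ops(1)[OF z1(2) z2(2)])
  have z0: "z \<noteq> 0" using assms(11) by (simp add: z_def)
  have nb: "cmod z * cmod (\<sigma> z) \<ge> 1"
    by (rule norm_bound[OF assms(1-5) r zK zi z0])
  have sz: "\<sigma> z = \<sigma> z1 - \<sigma> z2" unfolding z_def by (rule sdiff[OF sub assms(4) z1(1) z2(1)])
  have szD: "cmod (\<sigma> z) \<le> diameter B"
    using diameter_bounded_bound[OF assms(7) z1(3) z2(3)] by (simp add: sz dist_norm)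
  have "cmod z * diameter B \<ge> 1"
    using nb szD by (meson mult_left_mono norm_ge_zero order_trans)
  moreover have Dpos: "diameter B > 0"
  proof (rule ccontr)
    assume "\<not> diameter B > 0"
    hence "cmod z * diameter B \<le> 0" by (simp add: mult_nonneg_nonpos)
    thus False using \<open>cmod z * diameter B \<ge> 1\<close> by simp
  qed
  ultimately have "cmod z \<ge> 1 / diameter B" by (simp add: field_simps)
  moreover have "1 / (2 * diameter B) \<le> 1 / diameter B" using Dpos by (simp add: field_simps)
  ultimately show ?thesis by (simp add: z_def)
qed


end
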